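(* Let $N\geq 5$ and let $B$ be the unit ball in $\mathbb{R}^N$. Then for all $u\in C_0^\infty(B)$, \[ \int_B\frac{|\nabla u|^2}{|x|^2-\tfrac{9}{10}|x|^{\frac N2+1}}\,dx\;\geq\;\Big(\frac{N-4}{2}\Big)^2\int_B\frac{u^2}{\big(|x|^2-\tfrac{9}{10}|x|^{\frac N2+1}\big)\big(|x|^2-|x|^{\frac N2}\big)}\,dx \] and \[ \int_B\frac{|\nabla u|^2}{|x|^2}\,dx\;\geq\;\Big(\frac{N-4}{2}\Big)^2\int_B\frac{u^2}{|x|^2\big(|x|^2-|x|^{\frac N2}\big)}\,dx. \] *)

theory Defs
  imports "HOL-Analysis.Analysis"
begin

definition partial_deriv :: "'n::finite \<Rightarrow> (real^'n \<Rightarrow> real) \<Rightarrow> real^'n \<Rightarrow> real" where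
  "partial_deriv i g x = deriv (\<lambda>t. g (x + t *\<^sub>R axis i 1)) 0"

fun iter_partial :: "'n::finite list \<Rightarrow> (real^'n \<Rightarrow> real) \<Rightarrow> real^'n \<Rightarrow> real" where
  "iter_partial [] g = g"
| "iter_partial (i # is) g = partial_deriv i (iter_partial is g)"

text \<open>C-infinity on the whole space: every iterated partial derivative is
  (Frechet) differentiable everywhere (hence all of them exist and are continuous).\<close>
definition smooth :: "(real^'n::finite \<Rightarrow> real) \<Rightarrow> bool" where
  "smooth g \<longleftrightarrow> (\<forall>is. \<forall>x. iter_partial is g differentiable at x)"

text \<open>C_0^infinity(S): smooth functions whose support is compact and contained in S
  (identified with their extension by zero to the whole space).\<close>
definition C0_infty :: "(real^'n::finite) set \<Rightarrow> (real^'n \<Rightarrow> real) set" where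
  "C0_infty S = {g. smooth g \<and> compact (closure {x. g x \<noteq> 0}) \<and> closure {x. g x \<noteq> 0} \<subseteq> S}"

definition grad :: "(real^'n::finite \<Rightarrow> real) \<Rightarrow> real^'n \<Rightarrow> real^'n" where
  "grad g x = (\<chi> i. partial_deriv i g x)"

end

theory Submission
  imports Defs
begin


lemma scale_integral:
  fixes h :: "'a::euclidean_space \<Rightarrow> real"
  assumes hm[measurable]: "h \<in> borel_measurable borel" and hi: "integrable lborel h" and c: "c > 0"
  shows "integrable lborel (\<lambda>x. h (c *\<^sub>R x))"
    and "integral\<^sup>L lborel h = c ^ DIM('a) * integral\<^sup>L lborel (\<lambda>x. h (c *\<^sub>R x))"
proof -
  have L: "(lborel::'a measure) = density (distr (lborel::'a measure) (borel::'a measure) (\<lambda>x. 0 + c *\<^sub>R x)) (\<lambda>_. \<bar>c\<bar>^DIM('a))"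
    using lborel_affine[of c "0::'a"] c by simp
  have "integrable (density (distr lborel borel (\<lambda>x. 0 + c *\<^sub>R x)) (\<lambda>_. \<bar>c\<bar>^DIM('a))) h"
    using hi L by simp
  then have "integrable (distr lborel borel (\<lambda>x. 0 + c *\<^sub>R x)) (\<lambda>x. \<bar>c\<bar>^DIM('a) *\<^sub>R h x)"
    by (subst (asm) integrable_density) auto
  then have "integrable lborel (\<lambda>x. \<bar>c\<bar>^DIM('a) *\<^sub>R h (c *\<^sub>R x))"
    by (subst (asm) integrable_distr_eq) auto
  then show I: "integrable lborel (\<lambda>x. h (c *\<^sub>R x))"
    using c by simp
  have "integral\<^sup>L lborel h = integral\<^sup>L (density (distr lborel borel (\<lambda>x. 0 + c *\<^sub>R x)) (\<lambda>_. \<bar>c\<bar>^DIM('a))) h"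
    using L by simp
  also have "\<dots> = integral\<^sup>L (distr lborel borel (\<lambda>x. 0 + c *\<^sub>R x)) (\<lambda>x. \<bar>c\<bar>^DIM('a) *\<^sub>R h x)"
    by (subst integral_density) auto
  also have "\<dots> = integral\<^sup>L lborel (\<lambda>x. \<bar>c\<bar>^DIM('a) *\<^sub>R h (c *\<^sub>R x))"
    by (subst integral_distr) auto
  also have "\<dots> = c ^ DIM('a) * integral\<^sup>L lborel (\<lambda>x. h (c *\<^sub>R x))"
    using c by simp
  finally show "integral\<^sup>L lborel h = c ^ DIM('a) * integral\<^sup>L lborel (\<lambda>x. h (c *\<^sub>R x))" .
qed




lemma ray_integral_zero:
  fixes h :: "'a::euclidean_space \<Rightarrow> real" and H :: "'a \<Rightarrow> real \<Rightarrow> real"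
  assumes hm[measurable]: "h \<in> borel_measurable borel" and hi: "integrable lborel h"
    and der: "\<And>x l. 1 \<le> l \<Longrightarrow> l \<le> 2 \<Longrightarrow> ((\<lambda>l. l ^ DIM('a) * h (l *\<^sub>R x)) has_real_derivative H x l) (at l)"
    and bnd: "\<And>x l. 1 \<le> l \<Longrightarrow> l \<le> 2 \<Longrightarrow> \<bar>H x l\<bar> \<le> w x"
    and wi: "integrable lborel w"
  shows "integrable lborel (\<lambda>x. H x 1)" "integral\<^sup>L lborel (\<lambda>x. H x 1) = 0"
proof -
  define e :: "nat \<Rightarrow> real" where "e n = 1 / (real n + 1)" for n
  have e0: "0 < e n" "e n \<le> 1" for n by (auto simp: e_def field_simps)
  define s where "s n x = ((1 + e n) ^ DIM('a) * h ((1 + e n) *\<^sub>R x) - h x) / e n" for n x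
  have sm[measurable]: "s n \<in> borel_measurable lborel" for n
    unfolding s_def by measurable
  have lim: "(\<lambda>n. s n x) \<longlonglongrightarrow> H x 1" for x
  proof -
    define f where "f l = l ^ DIM('a) * h (l *\<^sub>R x)" for l
    have "(f has_real_derivative H x 1) (at 1)" using der[of 1 x] unfolding f_def[abs_def] by simp
    then have D: "((\<lambda>y. (f y - f 1) / (y - 1)) \<longlongrightarrow> H x 1) (at 1)"
      by (simp add: has_field_derivative_iff)
    have F: "filterlim (\<lambda>n. 1 + e n) (at 1) sequentially"
    proof (rule filterlim_atI)
      have "(\<lambda>n. e n) \<longlonglongrightarrow> 0" unfolding e_def using LIMSEQ_inverse_real_of_nat by (simp add: inverse_eq_divide add.commute)
      then show "(\<lambda>n. 1 + e n) \<longlonglongrightarrow> 1" using tendsto_add[OF tendsto_const[of 1]] by fastforce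
      show "\<forall>\<^sub>F n in sequentially. 1 + e n \<noteq> 1" using e0 by (auto intro!: always_eventually simp: less_imp_neq[symmetric])
    qed
    have "(\<lambda>n. (f (1 + e n) - f 1) / ((1 + e n) - 1)) \<longlonglongrightarrow> H x 1"
      by (rule filterlim_compose[OF D F])
    then show ?thesis by (simp add: s_def f_def)
  qed
  have Hm: "(\<lambda>x. H x 1) \<in> borel_measurable lborel"
    by (rule borel_measurable_LIMSEQ_real[OF lim sm])
  have bd: "norm (s n x) \<le> w x" for n x
  proof -
    define f where "f l = l ^ DIM('a) * h (l *\<^sub>R x)" for l
    have "\<exists>z>1. z < 1 + e n \<and> f (1 + e n) - f 1 = (1 + e n - 1) * H x z"
      apply (rule MVT2)
      using e0[of n] der[of _ x] by (auto simp: f_def)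
    then obtain z where z: "1 < z" "z < 1 + e n" "f (1 + e n) - f 1 = e n * H x z" by auto
    have "s n x = H x z" using z(3) e0[of n] by (simp add: s_def f_def field_simps)
    then show ?thesis using bnd[of z x] z e0[of n] by auto
  qed
  have limAE: "AE x in lborel. (\<lambda>n. s n x) \<longlonglongrightarrow> H x 1" using lim by simp
  have bdAE: "AE x in lborel. norm (s n x) \<le> w x" for n using bd by simp
  have "integrable lborel (\<lambda>x. H x 1) \<and> (\<lambda>n. integral\<^sup>L lborel (s n)) \<longlonglongrightarrow> integral\<^sup>L lborel (\<lambda>x. H x 1)"
    using integrable_dominated_convergence[OF Hm sm wi limAE bdAE] integral_dominated_convergence[OF Hm sm wi limAE bdAE]
    by auto
  moreover have "integral\<^sup>L lborel (s n) = 0" for n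
  proof -
    have c: "1 + e n > 0" using e0[of n] by simp
    have I2: "integrable lborel (\<lambda>x. h ((1 + e n) *\<^sub>R x))" using scale_integral(1)[OF hm hi c] .
    have "integral\<^sup>L lborel (s n) = ((1 + e n) ^ DIM('a) * integral\<^sup>L lborel (\<lambda>x. h ((1 + e n) *\<^sub>R x)) - integral\<^sup>L lborel h) / e n"
      unfolding s_def using I2 hi by simp
    also have "\<dots> = 0" using scale_integral(2)[OF hm hi c] by simp
    finally show ?thesis .
  qed
  ultimately show "integrable lborel (\<lambda>x. H x 1)" "integral\<^sup>L lborel (\<lambda>x. H x 1) = 0"
    using LIMSEQ_unique[of "\<lambda>n. 0::real"] by auto
qed




lemma vec_axis_expansion: "(x::real^'n) = (\<Sum>i\<in>UNIV. x $ i *\<^sub>R axis i 1)"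
  by (simp add: vec_eq_iff axis_def sum_component if_distrib cong: if_cong)

lemma smooth_diff:
  assumes "smooth u" shows "u differentiable at y"
  using assms unfolding smooth_def by (metis iter_partial.simps(1))

lemma smooth_partial_diff:
  assumes "smooth u" shows "partial_deriv i u differentiable at y"
  using assms unfolding smooth_def by (metis iter_partial.simps iter_partial.simps(1))

lemma smooth_has_derivative:
  assumes "smooth u" shows "(u has_derivative frechet_derivative u (at y)) (at y)"
  using smooth_diff[OF assms] frechet_derivative_works by blast

lemma smooth_partial_eq:
  assumes "smooth u" shows "partial_deriv i u y = frechet_derivative u (at y) (axis i 1)"
proof -
  let ?D = "frechet_derivative u (at y)"
  have L: "linear ?D" using has_derivative_linear[OF smooth_has_derivative[OF assms]] .
  have "((\<lambda>t. y + t *\<^sub>R axis i 1) has_derivative (\<lambda>t. t *\<^sub>R axis i 1)) (at 0)"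
    by (auto intro!: derivative_eq_intros)
  from has_derivative_compose[OF this, of u ?D] smooth_has_derivative[OF assms, of y]
  have "((\<lambda>t. u (y + t *\<^sub>R axis i 1)) has_derivative (\<lambda>t. ?D (t *\<^sub>R axis i 1))) (at 0)"
    by (simp add: o_def)
  moreover have "(\<lambda>t. ?D (t *\<^sub>R axis i 1)) = (\<lambda>t. ?D (axis i 1) * t)"
    using L by (auto simp: linear_scale)
  ultimately have "((\<lambda>t. u (y + t *\<^sub>R axis i 1)) has_real_derivative ?D (axis i 1)) (at 0)"
    by (simp add: has_field_derivative_def)
  then show ?thesis unfolding partial_deriv_def by (rule DERIV_imp_deriv)
qed

lemma smooth_frechet_grad:
  assumes "smooth u" shows "frechet_derivative u (at y) x = x \<bullet> grad u y"
proof -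
  let ?D = "frechet_derivative u (at y)"
  have L: "linear ?D" using has_derivative_linear[OF smooth_has_derivative[OF assms]] .
  have "?D x = ?D (\<Sum>i\<in>UNIV. x $ i *\<^sub>R axis i 1)" by (subst vec_axis_expansion) simp
  also have "\<dots> = (\<Sum>i\<in>UNIV. x $ i * ?D (axis i 1))"
    using L by (simp add: linear_sum linear_scale)
  also have "\<dots> = x \<bullet> grad u y"
    by (simp add: inner_vec_def grad_def smooth_partial_eq[OF assms])
  finally show ?thesis .
qed

lemma smooth_ray_deriv:
  assumes "smooth u"
  shows "((\<lambda>l. u (l *\<^sub>R x)) has_real_derivative (x \<bullet> grad u (l *\<^sub>R x))) (at l)"
proof -
  let ?D = "frechet_derivative u (at (l *\<^sub>R x))"
  have L: "linear ?D" using has_derivative_linear[OF smooth_has_derivative[OF assms]] .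
  have "((\<lambda>t. t *\<^sub>R x) has_derivative (\<lambda>t. t *\<^sub>R x)) (at l)"
    by (auto intro!: derivative_eq_intros)
  from has_derivative_compose[OF this, of u ?D] smooth_has_derivative[OF assms, of "l *\<^sub>R x"]
  have "((\<lambda>t. u (t *\<^sub>R x)) has_derivative (\<lambda>t. ?D (t *\<^sub>R x))) (at l)"
    by (simp add: o_def)
  moreover have "(\<lambda>t. ?D (t *\<^sub>R x)) = (\<lambda>t. ?D x * t)"
    using L by (auto simp: linear_scale)
  ultimately show ?thesis
    by (simp add: has_field_derivative_def smooth_frechet_grad[OF assms])
qed

lemma smooth_cont: "smooth u \<Longrightarrow> continuous_on UNIV u"
  by (meson continuous_at_imp_continuous_on differentiable_imp_continuous_within smooth_diff)

lemma smooth_partial_cont: "smooth u \<Longrightarrow> continuous_on UNIV (partial_deriv i u)"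
  by (meson continuous_at_imp_continuous_on differentiable_imp_continuous_within smooth_partial_diff)




definition Tf :: "real \<Rightarrow> real \<Rightarrow> real" where "Tf s r = r powr s"
definition Ef :: "real \<Rightarrow> real \<Rightarrow> real \<Rightarrow> real" where "Ef a s r = a * r powr (s + 1)"
definition gf :: "real \<Rightarrow> real \<Rightarrow> real \<Rightarrow> real" where
  "gf a s r = s / ((1 - Ef a s r) * (1 - Tf s r))"
definition kf :: "real \<Rightarrow> real \<Rightarrow> real \<Rightarrow> real \<Rightarrow> real" where
  "kf a s d r = gf a s r / (r ^ 4 + d)"
definition gdf :: "real \<Rightarrow> real \<Rightarrow> real \<Rightarrow> real" where
  "gdf a s r = s * (a * (s + 1) * r powr s * (1 - Tf s r) + (1 - Ef a s r) * (s * r powr (s - 1)))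
       / ((1 - Ef a s r) * (1 - Tf s r)) ^ 2"
definition kdf :: "real \<Rightarrow> real \<Rightarrow> real \<Rightarrow> real \<Rightarrow> real" where
  "kdf a s d r = (gdf a s r * (r ^ 4 + d) - gf a s r * (4 * r ^ 3)) / (r ^ 4 + d) ^ 2"

lemma E_lt1: "0 \<le> a \<Longrightarrow> a < 1 \<Longrightarrow> 0 \<le> r \<Longrightarrow> r < 1 \<Longrightarrow> s > 0 \<Longrightarrow> Ef a s r < 1"
proof -
  assume *: "0 \<le> a" "a < 1" "0 \<le> r" "r < 1" "s > 0"
  have "r powr (s+1) \<le> 1 powr (s+1)" using * by (intro powr_mono2) auto
  then have "r powr (s+1) \<le> 1" by simp
  then have "a * r powr (s+1) \<le> a" using * by (simp add: mult_left_le)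
  then show ?thesis using * by (simp add: Ef_def)
qed

lemma E_ge0: "0 \<le> a \<Longrightarrow> 0 \<le> Ef a s r" by (simp add: Ef_def)

lemma T_lt1: "0 \<le> r \<Longrightarrow> r < 1 \<Longrightarrow> s > 0 \<Longrightarrow> Tf s r < 1"
  using powr_less_mono2[of s r 1] by (auto simp: Tf_def)

lemma T_ge0: "0 \<le> Tf s r" by (simp add: Tf_def)

lemma k_deriv:
  assumes "0 \<le> a" "a < 1" "s > 0" "d > 0" "0 < r" "r < 1"
  shows "(kf a s d has_real_derivative kdf a s d r) (at r)"
proof -
  have E: "Ef a s r < 1" and T: "Tf s r < 1" using E_lt1 T_lt1 assms by auto
  have dT: "(Tf s has_real_derivative s * r powr (s-1)) (at r)"
    unfolding Tf_def[abs_def] using assms by (auto intro!: derivative_eq_intros)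
  have dE: "(Ef a s has_real_derivative a * ((s+1) * r powr s)) (at r)"
    unfolding Ef_def[abs_def] using assms by (auto intro!: derivative_eq_intros)
  have nz: "(1 - Ef a s r) * (1 - Tf s r) \<noteq> 0" using E T by simp
  have dP: "((\<lambda>r. (1 - Ef a s r) * (1 - Tf s r)) has_real_derivative
      (- (a * ((s+1) * r powr s))) * (1 - Tf s r) + (1 - Ef a s r) * (- (s * r powr (s-1)))) (at r)"
    by (rule DERIV_cong[OF DERIV_mult[OF DERIV_diff[OF DERIV_const[of 1] dE] DERIV_diff[OF DERIV_const[of 1] dT]]])
      (simp add: algebra_simps)
  have "((\<lambda>r. s / ((1 - Ef a s r) * (1 - Tf s r))) has_real_derivative
      (0 * ((1 - Ef a s r) * (1 - Tf s r)) - s * ((- (a * ((s+1) * r powr s))) * (1 - Tf s r) + (1 - Ef a s r) * (- (s * r powr (s-1)))))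
        / (((1 - Ef a s r) * (1 - Tf s r)) * ((1 - Ef a s r) * (1 - Tf s r)))) (at r)"
    by (rule DERIV_divide[OF DERIV_const dP nz])
  moreover have "(0 * ((1 - Ef a s r) * (1 - Tf s r)) - s * ((- (a * ((s+1) * r powr s))) * (1 - Tf s r) + (1 - Ef a s r) * (- (s * r powr (s-1)))))
        / (((1 - Ef a s r) * (1 - Tf s r)) * ((1 - Ef a s r) * (1 - Tf s r))) = gdf a s r"
    unfolding gdf_def by (simp add: power2_eq_square algebra_simps)
  ultimately have gd: "(gf a s has_real_derivative gdf a s r) (at r)"
    unfolding gf_def[abs_def] by simp
  have pos: "0 < r^4 + d" using assms by (intro add_nonneg_pos) auto
  then have nz4: "r^4 + d \<noteq> 0" by simp
  show ?thesis
    unfolding kf_def[abs_def] kdf_def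
    using assms pos
    by (auto intro!: derivative_eq_intros gd simp: power2_eq_square nz4)
qed




lemma key_ineq:
  fixes s E T R d :: real
  assumes s: "s > 0" and E: "0 \<le> E" "E < 1" and T: "0 \<le> T" "T < 1" and R: "R \<ge> 0" and d: "d > 0"
  defines "g \<equiv> s / ((1 - E) * (1 - T))"
  defines "rg \<equiv> s * ((s + 1) * E * (1 - T) + (1 - E) * s * T) / ((1 - E) * (1 - T)) ^ 2"
  shows "(2 * s + 4) * (g/(R+d)) + (rg*(R+d) - 4*R*g)/(R+d)^2 - R*(1-E)*(g/(R+d))^2
         \<ge> s^2/((R+d)*(1-E)*(1-T))"
proof -
  define A where "A = 1 - E"
  define B where "B = 1 - T"
  define D where "D = R + d"
  define m where "m = R / D"
  have A: "A > 0" "A \<le> 1" and B: "B > 0" and D: "D > 0" using E T R d by (auto simp: A_def B_def D_def)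
  have m: "0 \<le> m" "m \<le> 1" using R D d by (auto simp: m_def D_def)
  have g0: "g \<ge> 0" using s A B by (simp add: g_def A_def[symmetric] B_def[symmetric])
  have L1: "(rg*(R+d) - 4*R*g)/(R+d)^2 = (rg - 4*m*g)/D"
    using D by (simp add: m_def D_def field_simps power2_eq_square)
  have L2: "R*(1-E)*(g/(R+d))^2 = m*A*g^2/D"
    using D by (simp add: m_def D_def A_def field_simps power2_eq_square)
  have L: "(2 * s + 4) * (g/(R+d)) + (rg*(R+d) - 4*R*g)/(R+d)^2 - R*(1-E)*(g/(R+d))^2
        = ((2 * s + 4)*g + rg - 4*m*g - m*A*g^2)/D"
    unfolding L1 L2 by (simp add: D_def add_divide_distrib diff_divide_distrib)
  have "(2 * s + 4)*g + rg - 4*m*g - m*A*g^2 \<ge> 2 * s*g + rg - A*g^2"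
  proof -
    have "4*g*(1-m) \<ge> 0" using g0 m by simp
    moreover have "A*g^2*(1-m) \<ge> 0" using A m by simp
    ultimately show ?thesis by (simp add: algebra_simps)
  qed
  moreover have "2 * s*g + rg - A*g^2 = s^2/(A*B) + s*(s+1)*E/(A^2*B)"
  proof -
    have gA: "g = s/(A*B)" by (simp add: g_def A_def B_def)
    have rgA: "rg = s*((s+1)*(1-A)*B + A* s*(1-B))/(A*B)^2" by (simp add: rg_def A_def B_def)
    have E': "E = 1 - A" by (simp add: A_def)
    show ?thesis unfolding gA rgA E' using A B
      by (simp add: field_simps power2_eq_square)
  qed
  moreover have "s*(s+1)*E/(A^2*B) \<ge> 0" using s E A B by simp
  ultimately have "(2 * s + 4)*g + rg - 4*m*g - m*A*g^2 \<ge> s^2/(A*B)" by linarith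
  then have "((2 * s + 4)*g + rg - 4*m*g - m*A*g^2)/D \<ge> (s^2/(A*B))/D"
    by (rule divide_right_mono) (use D in auto)
  then show ?thesis unfolding L using D A B by (simp add: A_def B_def D_def field_simps)
qed

lemma r_kdf:
  assumes "r > 0"
  shows "r * kdf a s d r =
    (s * ((s + 1) * Ef a s r * (1 - Tf s r) + (1 - Ef a s r) * s * Tf s r) / ((1 - Ef a s r) * (1 - Tf s r)) ^ 2
      * (r^4 + d) - 4 * r^4 * gf a s r) / (r^4 + d)^2"
proof -
  have 1: "r * r powr s = r powr (s + 1)" using assms by (simp add: powr_add)
  have 2: "r * r powr (s - 1) = r powr s" using assms powr_add[of r 1 "s - 1"] by simp
  have "r * gdf a s r = s * ((a * (s + 1) * (r * r powr s)) * (1 - Tf s r) + (1 - Ef a s r) * (s * (r * r powr (s - 1))))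
      / ((1 - Ef a s r) * (1 - Tf s r)) ^ 2"
    unfolding gdf_def by (simp add: algebra_simps)
  also have "\<dots> = s * ((s + 1) * Ef a s r * (1 - Tf s r) + (1 - Ef a s r) * s * Tf s r) / ((1 - Ef a s r) * (1 - Tf s r)) ^ 2"
    unfolding 1 2 by (simp add: Ef_def Tf_def algebra_simps)
  finally have G: "r * gdf a s r = s * ((s + 1) * Ef a s r * (1 - Tf s r) + (1 - Ef a s r) * s * Tf s r) / ((1 - Ef a s r) * (1 - Tf s r)) ^ 2" .
  have "r * kdf a s d r = (r * gdf a s r * (r ^ 4 + d) - 4 * r^4 * gf a s r) / (r ^ 4 + d) ^ 2"
    unfolding kdf_def by (simp add: eval_nat_numeral algebra_simps)
  then show ?thesis unfolding G .
qed




lemma g_bound: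
  fixes s E T e0 t0 :: real
  assumes "s > 0" "0 \<le> E" "E \<le> e0" "e0 < 1" "0 \<le> T" "T \<le> t0" "t0 < 1"
  shows "s / ((1 - E) * (1 - T)) \<le> s / ((1 - e0) * (1 - t0))" "0 \<le> s / ((1 - E) * (1 - T))"
proof -
  have "(1 - e0) * (1 - t0) \<le> (1 - E) * (1 - T)" using assms by (intro mult_mono) auto
  moreover have "0 < (1 - e0) * (1 - t0)" using assms by simp
  ultimately show "s / ((1 - E) * (1 - T)) \<le> s / ((1 - e0) * (1 - t0))"
    using assms by (intro divide_left_mono) auto
  show "0 \<le> s / ((1 - E) * (1 - T))" using assms by simp
qed

lemma rg_bound:
  fixes s E T e0 t0 :: real
  assumes "s > 0" "0 \<le> E" "E \<le> e0" "e0 < 1" "0 \<le> T" "T \<le> t0" "t0 < 1"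
  shows "s * ((s + 1) * E * (1 - T) + (1 - E) * s * T) / ((1 - E) * (1 - T)) ^ 2 \<le> s * (2 * s + 1) / ((1 - e0) * (1 - t0)) ^ 2"
    "0 \<le> s * ((s + 1) * E * (1 - T) + (1 - E) * s * T) / ((1 - E) * (1 - T)) ^ 2"
proof -
  have p: "0 < (1 - e0) * (1 - t0)" using assms by simp
  have "(1 - e0) * (1 - t0) \<le> (1 - E) * (1 - T)" using assms by (intro mult_mono) auto
  then have den: "((1 - e0) * (1 - t0))^2 \<le> ((1 - E) * (1 - T))^2" using p by (intro power_mono) auto
  have n0: "0 \<le> (s + 1) * E * (1 - T) + (1 - E) * s * T" using assms by simp
  have "E * (1 - T) \<le> 1" by (intro mult_le_one) (use assms in auto)
  then have 1: "(s + 1) * (E * (1 - T)) \<le> (s + 1) * 1" using assms by (intro mult_left_mono) auto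
  have "(1 - E) * T \<le> 1" by (intro mult_le_one) (use assms in auto)
  then have 2: "s * ((1 - E) * T) \<le> s * 1" using assms by (intro mult_left_mono) auto
  have "(s + 1) * E * (1 - T) + (1 - E) * s * T \<le> (s + 1) * 1 + s * 1"
    using 1 2 by (simp add: algebra_simps)
  then have num: "s * ((s + 1) * E * (1 - T) + (1 - E) * s * T) \<le> s * (2 * s + 1)"
    using assms by (intro mult_left_mono) auto
  show "s * ((s + 1) * E * (1 - T) + (1 - E) * s * T) / ((1 - E) * (1 - T)) ^ 2 \<le> s * (2 * s + 1) / ((1 - e0) * (1 - t0)) ^ 2"
    using assms n0 num den p by (intro frac_le) auto
  show "0 \<le> s * ((s + 1) * E * (1 - T) + (1 - E) * s * T) / ((1 - E) * (1 - T)) ^ 2"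
    using assms n0 by simp
qed

lemma kd_abs_bound:
  fixes rg g R d :: real
  assumes "0 \<le> rg" "0 \<le> g" "0 \<le> R" "0 < d"
  shows "\<bar>(rg * (R + d) - 4 * R * g) / (R + d)^2\<bar> \<le> rg / d + 4 * g / d"
proof -
  have D: "0 < R + d" using assms by simp
  have "\<bar>(rg * (R + d) - 4 * R * g) / (R + d)^2\<bar> \<le> (rg * (R + d) + 4 * R * g) / (R + d)^2"
    using assms D by (auto simp: abs_le_iff divide_right_mono)
  also have "\<dots> = rg / (R + d) + 4 * g * (R / (R + d)) / (R + d)"
  proof -
    have nz: "R + d \<noteq> 0" using D by simp
    show ?thesis using nz by (simp add: divide_simps power2_eq_square)
  qed
  also have "\<dots> \<le> rg / d + 4 * g * 1 / d"
  proof (intro add_mono frac_le mult_left_mono)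
    show "R / (R + d) \<le> 1" using assms D by simp
  qed (use assms D in auto)
  finally show ?thesis by simp
qed

lemma k_bounds:
  assumes a: "0 \<le> a" "a < 1" and s: "s > 0" and d: "d > 0" and rho: "0 \<le> \<rho>" "\<rho> < 1"
  shows "\<exists>K. \<forall>r. 0 \<le> r \<longrightarrow> r \<le> \<rho> \<longrightarrow> 0 \<le> kf a s d r \<and> kf a s d r \<le> K"
    and "\<exists>K1. \<forall>r. 0 < r \<longrightarrow> r \<le> \<rho> \<longrightarrow> \<bar>r * kdf a s d r\<bar> \<le> K1"
proof -
  define t0 where "t0 = \<rho> powr s"
  have t0: "t0 < 1" using powr_less_mono2[of s \<rho> 1] rho s by (auto simp: t0_def)
  have ET: "0 \<le> Ef a s r" "Ef a s r \<le> a" "0 \<le> Tf s r" "Tf s r \<le> t0" if "0 \<le> r" "r \<le> \<rho>" for r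
  proof -
    show "0 \<le> Ef a s r" using a by (simp add: Ef_def)
    have "r powr (s+1) \<le> 1 powr (s+1)" using that rho s by (intro powr_mono2) auto
    then show "Ef a s r \<le> a" using a by (simp add: Ef_def mult_left_le)
    show "0 \<le> Tf s r" by (simp add: Tf_def)
    show "Tf s r \<le> t0" unfolding Tf_def t0_def using that s by (intro powr_mono2) auto
  qed
  define G0 where "G0 = s / ((1 - a) * (1 - t0))"
  define RG0 where "RG0 = s * (2 * s + 1) / ((1 - a) * (1 - t0)) ^ 2"
  have gb: "0 \<le> gf a s r" "gf a s r \<le> G0" if "0 \<le> r" "r \<le> \<rho>" for r
    using g_bound[OF s _ _ a(2) _ _ t0, of "Ef a s r" "Tf s r"] ET[OF that] unfolding gf_def G0_def by auto
  have R4: "0 \<le> r^4" for r :: real by simp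
  show "\<exists>K. \<forall>r. 0 \<le> r \<longrightarrow> r \<le> \<rho> \<longrightarrow> 0 \<le> kf a s d r \<and> kf a s d r \<le> K"
  proof (intro exI allI impI conjI)
    fix r :: real assume r: "0 \<le> r" "r \<le> \<rho>"
    show "0 \<le> kf a s d r" using gb[OF r] d by (simp add: kf_def)
    have "gf a s r / (r^4 + d) \<le> G0 / d"
      using gb[OF r] d by (intro frac_le) auto
    then show "kf a s d r \<le> G0 / d" by (simp add: kf_def)
  qed
  show "\<exists>K1. \<forall>r. 0 < r \<longrightarrow> r \<le> \<rho> \<longrightarrow> \<bar>r * kdf a s d r\<bar> \<le> K1"
  proof (intro exI allI impI)
    fix r :: real assume r: "0 < r" "r \<le> \<rho>"
    let ?rg = "s * ((s + 1) * Ef a s r * (1 - Tf s r) + (1 - Ef a s r) * s * Tf s r) / ((1 - Ef a s r) * (1 - Tf s r)) ^ 2"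
    have rgb: "0 \<le> ?rg" "?rg \<le> RG0"
      using rg_bound[OF s _ _ a(2) _ _ t0, of "Ef a s r" "Tf s r"] ET[of r] r unfolding RG0_def by auto
    have "\<bar>r * kdf a s d r\<bar> \<le> ?rg / d + 4 * gf a s r / d"
      unfolding r_kdf[OF r(1)] using rgb gb[of r] r d by (intro kd_abs_bound) auto
    also have "\<dots> \<le> RG0 / d + 4 * G0 / d"
      using rgb gb[of r] r d by (intro add_mono divide_right_mono) auto
    finally show "\<bar>r * kdf a s d r\<bar> \<le> RG0 / d + 4 * G0 / d" .
  qed
qed




lemma support_radius:
  fixes u :: "real^'n \<Rightarrow> real"
  assumes "u \<in> C0_infty (ball 0 1)"
  obtains \<rho> where "0 \<le> \<rho>" "\<rho> < 1" "\<And>x. u x \<noteq> 0 \<Longrightarrow> norm x \<le> \<rho>"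
proof -
  let ?S = "closure {x. u x \<noteq> 0}"
  have S: "compact ?S" "?S \<subseteq> ball 0 1" using assms unfolding C0_infty_def by auto
  show ?thesis
  proof (cases "?S = {}")
    case True
    show ?thesis
    proof (rule that[of 0])
      fix x :: "real^'n" assume "u x \<noteq> 0"
      then have "x \<in> ?S" by (intro subsetD[OF closure_subset]) simp
      then show "norm x \<le> 0" using True by simp
    qed auto
  next
    case False
    obtain x0 where x0: "x0 \<in> ?S" "\<And>y. y \<in> ?S \<Longrightarrow> norm y \<le> norm x0"
      using continuous_attains_sup[OF S(1) False continuous_on_norm_id] by auto
    have "norm x0 < 1" using x0(1) S(2) by auto
    show ?thesis
    proof (rule that[of "norm x0"])
      fix x :: "real^'n" assume "u x \<noteq> 0"
      then have "x \<in> ?S" by (intro subsetD[OF closure_subset]) simp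
      then show "norm x \<le> norm x0" using x0(2) by simp
    qed (use \<open>norm x0 < 1\<close> in auto)
  qed
qed

lemma smooth_bounds:
  fixes u :: "real^'n \<Rightarrow> real"
  assumes "smooth u"
  obtains Ub Gb where "0 \<le> Ub" "0 \<le> Gb" "\<And>y. norm y \<le> 1 \<Longrightarrow> \<bar>u y\<bar> \<le> Ub"
    "\<And>y. norm y \<le> 1 \<Longrightarrow> norm (grad u y) \<le> Gb"
proof -
  have cb: "compact (cball (0::real^'n) 1)" by simp
  have "bounded (u ` cball 0 1)"
    using compact_imp_bounded[OF compact_continuous_image[OF continuous_on_subset[OF smooth_cont[OF assms]] cb]] by auto
  then obtain Ub where "\<forall>y\<in>cball 0 1. \<bar>u y\<bar> \<le> Ub" by (auto simp: bounded_iff)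
  then have Ub: "\<And>y. norm y \<le> 1 \<Longrightarrow> \<bar>u y\<bar> \<le> Ub" by simp
  have "\<forall>i. \<exists>B. \<forall>y. norm y \<le> 1 \<longrightarrow> \<bar>partial_deriv i u y\<bar> \<le> B"
  proof
    fix i
    have "bounded (partial_deriv i u ` cball 0 1)"
      using compact_imp_bounded[OF compact_continuous_image[OF continuous_on_subset[OF smooth_partial_cont[OF assms]] cb]] by auto
    then obtain B where "\<forall>y\<in>cball 0 1. \<bar>partial_deriv i u y\<bar> \<le> B" by (auto simp: bounded_iff)
    then show "\<exists>B. \<forall>y. norm y \<le> 1 \<longrightarrow> \<bar>partial_deriv i u y\<bar> \<le> B" by (intro exI[of _ B]) simp
  qed
  then obtain Bf where Bf: "\<And>i y. norm y \<le> 1 \<Longrightarrow> \<bar>partial_deriv i u y\<bar> \<le> Bf i" by metis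
  have G: "norm (grad u y) \<le> (\<Sum>i\<in>UNIV. Bf i)" if "norm y \<le> 1" for y
  proof -
    have "norm (grad u y) \<le> (\<Sum>i\<in>UNIV. \<bar>grad u y $ i\<bar>)" by (rule norm_le_l1_cart)
    also have "\<dots> \<le> (\<Sum>i\<in>UNIV. Bf i)" using Bf[OF that] by (intro sum_mono) (simp add: grad_def)
    finally show ?thesis .
  qed
  show ?thesis
  proof (rule that[of "max Ub 0" "max (\<Sum>i\<in>UNIV. Bf i) 0"])
    fix y :: "real^'n" assume "norm y \<le> 1"
    then show "\<bar>u y\<bar> \<le> max Ub 0" "norm (grad u y) \<le> max (\<Sum>i\<in>UNIV. Bf i) 0"
      using Ub G by (auto simp: le_max_iff_disj)
  qed auto
qed

lemma sq_ineq:
  fixes q r X G c :: real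
  assumes "q > 0" "r \<ge> 0" "\<bar>X\<bar> \<le> r * G" "G \<ge> 0"
  shows "- 2 * c * X - q * r^2 * c^2 \<le> G^2 / q"
proof -
  have "- 2 * c * X \<le> 2 * \<bar>c\<bar> * (r * G)"
  proof -
    have "- 2 * c * X \<le> 2 * \<bar>c\<bar> * \<bar>X\<bar>" by (simp add: abs_mult[symmetric] abs_le_iff)
    also have "\<dots> \<le> 2 * \<bar>c\<bar> * (r * G)" using assms by (intro mult_left_mono) auto
    finally show ?thesis .
  qed
  moreover have "2 * \<bar>c\<bar> * (r * G) - q * r^2 * c^2 \<le> G^2 / q"
  proof -
    have "0 \<le> (G - q * r * \<bar>c\<bar>)^2 / q" using assms by simp
    also have "(G - q * r * \<bar>c\<bar>)^2 / q = G^2/q - 2 * \<bar>c\<bar> * (r * G) + q * r^2 * c^2"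
      using assms by (simp add: field_simps power2_eq_square)
    finally show ?thesis by simp
  qed
  ultimately show ?thesis by linarith
qed




lemma kf_meas[measurable]: "kf a s d \<in> borel_measurable borel"
  unfolding kf_def[abs_def] gf_def[abs_def] Ef_def[abs_def] Tf_def[abs_def] by measurable
lemma kdf_meas[measurable]: "kdf a s d \<in> borel_measurable borel"
  unfolding kdf_def[abs_def] gdf_def[abs_def] gf_def[abs_def] Ef_def[abs_def] Tf_def[abs_def] by measurable

lemma qform:
  fixes r s a N :: real
  assumes "r > 0" "s = N/2 - 2"
  shows "r^2 - a * r powr (N/2+1) = r^2 * (1 - Ef a s r)"
    and "r^2 - r powr (N/2) = r^2 * (1 - Tf s r)"
proof -
  have e1: "N/2+1 = 2 + (s+1)" using assms by simp
  have p2: "r powr 2 = r^2" using assms by simp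
  have "r powr (N/2+1) = r^2 * r powr (s+1)" unfolding e1 powr_add p2 ..
  then show "r^2 - a * r powr (N/2+1) = r^2 * (1 - Ef a s r)"
    unfolding Ef_def by (simp add: algebra_simps)
  have e2: "N/2 = 2 + s" using assms by simp
  have "r powr (N/2) = r^2 * r powr s" unfolding e2 powr_add p2 ..
  then show "r^2 - r powr (N/2) = r^2 * (1 - Tf s r)"
    unfolding Tf_def by (simp add: algebra_simps)
qed

lemma H_bound:
  fixes N P p1 p2 uu X kk z Ub Gb K K1 :: real
  assumes "0 \<le> p1" "p1 \<le> P" "0 \<le> p2" "p2 \<le> P" "\<bar>uu\<bar> \<le> Ub" "\<bar>X\<bar> \<le> Gb" "0 \<le> kk" "kk \<le> K"
    "\<bar>z\<bar> \<le> K1" "0 \<le> N"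
  shows "\<bar>N * p1 * (uu^2 * kk) + p2 * (2 * uu * X * kk + uu^2 * z)\<bar> \<le> P * (N * Ub^2 * K + 2 * Ub * Gb * K + Ub^2 * K1)"
proof -
  have u2: "uu^2 \<le> Ub^2" using power_mono[of "\<bar>uu\<bar>" Ub 2] assms by simp
  have a1: "\<bar>uu^2 * kk\<bar> \<le> Ub^2 * K" using u2 assms by (simp add: abs_mult mult_mono)
  have a2: "\<bar>2 * uu * X * kk\<bar> \<le> 2 * Ub * Gb * K"
  proof -
    have "\<bar>2 * uu * X * kk\<bar> = 2 * (\<bar>uu\<bar> * \<bar>X\<bar> * kk)" using assms by (simp add: abs_mult)
    also have "\<dots> \<le> 2 * (Ub * Gb * K)" using assms by (intro mult_left_mono mult_mono) auto
    finally show ?thesis by simp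
  qed
  have a3: "\<bar>uu^2 * z\<bar> \<le> Ub^2 * K1" using u2 assms by (simp add: abs_mult mult_mono)
  have "\<bar>N * p1 * (uu^2 * kk) + p2 * (2 * uu * X * kk + uu^2 * z)\<bar>
      \<le> N * p1 * \<bar>uu^2 * kk\<bar> + p2 * (\<bar>2 * uu * X * kk\<bar> + \<bar>uu^2 * z\<bar>)"
  proof -
    have "\<bar>N * p1 * (uu^2 * kk) + p2 * (2 * uu * X * kk + uu^2 * z)\<bar>
        \<le> \<bar>N * p1 * (uu^2 * kk)\<bar> + \<bar>p2 * (2 * uu * X * kk + uu^2 * z)\<bar>" by (rule abs_triangle_ineq)
    also have "\<bar>N * p1 * (uu^2 * kk)\<bar> = N * p1 * \<bar>uu^2 * kk\<bar>" using assms by (simp add: abs_mult)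
    also have "\<bar>p2 * (2 * uu * X * kk + uu^2 * z)\<bar> = p2 * \<bar>2 * uu * X * kk + uu^2 * z\<bar>" using assms by (simp add: abs_mult)
    also have "p2 * \<bar>2 * uu * X * kk + uu^2 * z\<bar> \<le> p2 * (\<bar>2 * uu * X * kk\<bar> + \<bar>uu^2 * z\<bar>)"
      using assms by (intro mult_left_mono abs_triangle_ineq) auto
    finally show ?thesis by simp
  qed
  also have "\<dots> \<le> N * P * (Ub^2 * K) + P * (2 * Ub * Gb * K + Ub^2 * K1)"
    using assms a1 a2 a3 by (intro add_mono mult_mono) auto
  finally show ?thesis by (simp add: algebra_simps)
qed




lemma ball_sets[measurable]: "ball (0::'a::euclidean_space) 1 \<in> sets borel" by simp

lemma fseq_meas:
  fixes u :: "real^'n \<Rightarrow> real"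
  assumes [measurable]: "u \<in> borel_measurable borel"
  shows "(\<lambda>x. ennreal ((u x)^2 * ((norm x)^4 / ((norm x)^4 + d)) / (((norm x)\<^sup>2 - a * norm x powr (N/2 + 1)) * ((norm x)\<^sup>2 - norm x powr (N/2)))) * indicator (ball 0 1) x) \<in> borel_measurable lborel"
  by measurable

lemma abs3:
  fixes kk K z K1 Q N :: real
  assumes "0 \<le> kk" "kk \<le> K" "\<bar>z\<bar> \<le> K1" "0 \<le> Q" "Q \<le> 1" "0 \<le> N"
  shows "\<bar>N * kk + z - Q * kk^2\<bar> \<le> N * K + K1 + K^2"
proof -
  have k2: "kk^2 \<le> K^2" using assms by (intro power_mono) auto
  have "0 \<le> Q * kk^2" "0 \<le> N * kk" using assms by auto
  then have "\<bar>N * kk + z - Q * kk^2\<bar> \<le> N * kk + \<bar>z\<bar> + Q * kk^2"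
    unfolding abs_le_iff using abs_ge_self[of z] abs_ge_minus_self[of z] by linarith
  also have "\<dots> \<le> N * K + K1 + 1 * K^2"
    using assms k2 by (intro add_mono mult_mono mult_left_mono) auto
  finally show ?thesis by simp
qed

lemma frac_cancel:
  fixes U R D C :: real
  assumes "R \<noteq> 0" "D \<noteq> 0" "C \<noteq> 0"
  shows "U * (R / D) / (R * C) = U / (D * C)"
  using assms by (simp add: field_simps)

lemma ineq_d:
  fixes u :: "real^'n \<Rightarrow> real" and a d :: real
  assumes N5: "CARD('n) \<ge> 5" and uC: "u \<in> C0_infty (ball 0 1)" and a: "0 \<le> a" "a < 1" and d: "d > 0"
  defines "N \<equiv> real CARD('n)"
  shows "ennreal (((N - 4)/2)\<^sup>2) * (\<integral>\<^sup>+ x \<in> ball 0 1. ennreal ((u x)^2 * ((norm x)^4 / ((norm x)^4 + d)) /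
              (((norm x)\<^sup>2 - a * norm x powr (N/2 + 1)) * ((norm x)\<^sup>2 - norm x powr (N/2)))) \<partial>lborel)
    \<le> (\<integral>\<^sup>+ x \<in> ball 0 1. ennreal ((norm (grad u x))\<^sup>2 / ((norm x)\<^sup>2 - a * norm x powr (N/2 + 1))) \<partial>lborel)"
proof -
  define n where "n = CARD('n)"
  define s where "s = N/2 - 2"
  have Nn: "N = real n" by (simp add: N_def n_def)
  have n5: "n \<ge> 5" using N5 by (simp add: n_def)
  have s0: "s > 0" using n5 by (simp add: s_def Nn)
  have Ns: "N = 2 * s + 4" by (simp add: s_def)
  have c4: "(N - 4)/2 = s" by (simp add: s_def)
  have sm: "smooth u" using uC by (simp add: C0_infty_def)
  have um[measurable]: "u \<in> borel_measurable borel"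
    by (rule borel_measurable_continuous_onI[OF smooth_cont[OF sm]])
  obtain \<rho> where rho: "0 \<le> \<rho>" "\<rho> < 1" and uz: "\<And>x. u x \<noteq> 0 \<Longrightarrow> norm x \<le> \<rho>"
    using support_radius[OF uC] by blast
  obtain Ub Gb where UG: "0 \<le> Ub" "0 \<le> Gb" "\<And>y. norm y \<le> 1 \<Longrightarrow> \<bar>u y\<bar> \<le> Ub"
    "\<And>y. norm y \<le> 1 \<Longrightarrow> norm (grad u y) \<le> Gb"
    using smooth_bounds[OF sm] by blast
  obtain K where K: "\<And>r. 0 \<le> r \<Longrightarrow> r \<le> \<rho> \<Longrightarrow> 0 \<le> kf a s d r \<and> kf a s d r \<le> K"
    using k_bounds(1)[OF a s0 d rho] by blast
  obtain K1' where K1': "\<And>r. 0 < r \<Longrightarrow> r \<le> \<rho> \<Longrightarrow> \<bar>r * kdf a s d r\<bar> \<le> K1'"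
    using k_bounds(2)[OF a s0 d rho] by blast
  define K1 where "K1 = max K1' 0"
  have K1: "\<And>r. 0 < r \<Longrightarrow> r \<le> \<rho> \<Longrightarrow> \<bar>r * kdf a s d r\<bar> \<le> K1" "0 \<le> K1"
    using K1' by (force simp: K1_def)+
  have K0: "0 \<le> K" using K[of 0] rho by auto
  define q where "q x = (norm x)\<^sup>2 - a * norm x powr (N/2 + 1)" for x :: "real^'n"
  define h where "h x = (u x)^2 * kf a s d (norm x)" for x :: "real^'n"
  define H where "H x l = N * l^(n-1) * h (l *\<^sub>R x) + l^n * (2 * u (l *\<^sub>R x) * (x \<bullet> grad u (l *\<^sub>R x)) * kf a s d (l * norm x)
      + (u (l *\<^sub>R x))^2 * (norm x * kdf a s d (l * norm x)))" for x :: "real^'n" and l :: real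
  define G where "G x = (u x)^2 * (N * kf a s d (norm x) + norm x * kdf a s d (norm x) - q x * (norm x)^2 * (kf a s d (norm x))^2)" for x :: "real^'n"
  define F where "F x = - 2 * (kf a s d (norm x) * u x) * (x \<bullet> grad u x) - q x * (norm x)^2 * (kf a s d (norm x) * u x)^2" for x :: "real^'n"
  define fs where "fs x = (u x)^2 * ((norm x)^4 / ((norm x)^4 + d)) /
              (((norm x)\<^sup>2 - a * norm x powr (N/2 + 1)) * ((norm x)\<^sup>2 - norm x powr (N/2)))" for x :: "real^'n"
  define W where "W x = (norm (grad u x))\<^sup>2 / ((norm x)\<^sup>2 - a * norm x powr (N/2 + 1))" for x :: "real^'n"
  define ind where "ind = (indicator (cball 0 1) :: real^'n \<Rightarrow> real)"
  have indi: "integrable lborel (\<lambda>x. C * ind x)" for C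
    unfolding ind_def by (intro integrable_mult_right integrable_real_indicator emeasure_bounded_finite) auto
  have kfm: "(\<lambda>x::real^'n. kf a s d (norm x)) \<in> borel_measurable borel"
    by (intro measurable_compose[OF borel_measurable_norm kf_meas])
  have kdfm: "(\<lambda>x::real^'n. kdf a s d (norm x)) \<in> borel_measurable borel"
    by (intro measurable_compose[OF borel_measurable_norm kdf_meas])
  have qm: "q \<in> borel_measurable borel" unfolding q_def[abs_def] by measurable
  have hm: "h \<in> borel_measurable borel"
    unfolding h_def[abs_def] using um kfm by (intro borel_measurable_times borel_measurable_power)
  have Gm: "G \<in> borel_measurable borel"
    unfolding G_def[abs_def] using um kfm kdfm qm
    by (intro borel_measurable_times borel_measurable_power borel_measurable_add borel_measurable_diff
        borel_measurable_const borel_measurable_norm) auto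
  have hmL: "h \<in> borel_measurable lborel" using hm by simp
  have GmL: "G \<in> borel_measurable lborel" using Gm by simp
  have ind0: "0 \<le> ind x" for x by (simp add: ind_def)
  have u2b: "(u y)^2 \<le> Ub^2" if "norm y \<le> 1" for y
    using power_mono[of "\<bar>u y\<bar>" Ub 2] UG(3)[OF that] by simp
  have supp: "norm x \<le> \<rho>" "norm x \<le> 1" "ind x = 1" if "u x \<noteq> 0" for x
    using uz[OF that] rho by (auto simp: ind_def)
  have hb: "\<bar>h x\<bar> \<le> Ub^2 * K * ind x" for x
  proof (cases "u x = 0")
    case True then show ?thesis using ind0[of x] K0 by (simp add: h_def)
  next
    case False
    have k: "0 \<le> kf a s d (norm x)" "kf a s d (norm x) \<le> K" using K[of "norm x"] supp[OF False] by auto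
    have "\<bar>h x\<bar> = (u x)^2 * kf a s d (norm x)" using k by (simp add: h_def abs_mult)
    also have "\<dots> \<le> Ub^2 * K" using k u2b[OF supp(2)[OF False]] by (intro mult_mono) auto
    finally show ?thesis using supp[OF False] by simp
  qed
  have hi: "integrable lborel h"
    by (rule Bochner_Integration.integrable_bound[OF indi[of "Ub^2 * K"] hmL]) (intro AE_I2, metis hb abs_ge_self order_trans real_norm_def)

  have DIMn: "DIM(real^'n) = n" by (simp add: n_def)
  have nz: "norm (l *\<^sub>R x) = l * norm x" if "l \<ge> 0" for l and x :: "real^'n" using that by simp
  have der: "((\<lambda>l. l ^ DIM(real^'n) * h (l *\<^sub>R x)) has_real_derivative H x l) (at l)"
    if l: "1 \<le> l" "l \<le> 2" for x l
  proof (cases "x = 0")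
    case True
    have "((\<lambda>l. l ^ n * h 0) has_real_derivative real n * l ^ (n - Suc 0) * h 0) (at l)"
      using DERIV_mult[OF DERIV_pow[of n] DERIV_const[of "h 0"]] by simp
    moreover have "H x l = real n * l ^ (n - Suc 0) * h 0" using True by (simp add: H_def Nn)
    ultimately show ?thesis using True by (simp add: n_def)
  next
    case x0: False
    show ?thesis
    proof (cases "norm (l *\<^sub>R x) \<le> \<rho>")
      case True
      have r: "0 < l * norm x" "l * norm x < 1" using True x0 l rho by (auto simp: nz)
      have du: "((\<lambda>l. u (l *\<^sub>R x)) has_real_derivative x \<bullet> grad u (l *\<^sub>R x)) (at l)"
        by (rule smooth_ray_deriv[OF sm])
      have dl: "((\<lambda>l. l * norm x) has_real_derivative norm x) (at l)"
        using DERIV_mult[OF DERIV_ident DERIV_const[of "norm x"]] by simp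
      have dk: "((\<lambda>l. kf a s d (l * norm x)) has_real_derivative kdf a s d (l * norm x) * norm x) (at l)"
        by (rule DERIV_chain2[OF k_deriv[OF a s0 d r] dl])
      have U2: "((\<lambda>l. (u (l *\<^sub>R x))^2) has_real_derivative 2 * u (l *\<^sub>R x) * (x \<bullet> grad u (l *\<^sub>R x))) (at l)"
        using DERIV_mult[OF du du] by (simp add: power2_eq_square algebra_simps)
      have d1: "((\<lambda>l. l ^ n * ((u (l *\<^sub>R x))^2 * kf a s d (l * norm x))) has_real_derivative H x l) (at l)"
      proof (rule DERIV_cong[OF DERIV_mult[OF DERIV_pow[of n] DERIV_mult[OF U2 dk]]])
        show "real n * l ^ (n - Suc 0) * ((u (l *\<^sub>R x))\<^sup>2 * kf a s d (l * norm x)) +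
          (2 * u (l *\<^sub>R x) * (x \<bullet> grad u (l *\<^sub>R x)) * kf a s d (l * norm x) +
           kdf a s d (l * norm x) * norm x * (u (l *\<^sub>R x))\<^sup>2) * l ^ n = H x l"
          using l by (simp add: H_def h_def Nn algebra_simps)
      qed
      show ?thesis
      proof (rule has_field_derivative_transform_within_open[OF d1, of "{0<..}"])
        show "open {0::real<..}" by simp
        show "l \<in> {0<..}" using l by simp
        fix y :: real assume "y \<in> {0<..}"
        then show "y ^ n * ((u (y *\<^sub>R x))\<^sup>2 * kf a s d (y * norm x)) = y ^ DIM(real^'n) * h (y *\<^sub>R x)"
          by (simp add: h_def n_def)
      qed
    next
      case False
      define Op where "Op = {\<mu>::real. \<rho> < norm (\<mu> *\<^sub>R x)}"
      have oO: "open Op" unfolding Op_def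
        by (intro open_Collect_less continuous_intros)
      have lO: "l \<in> Op" using False by (simp add: Op_def)
      have uO: "u (\<mu> *\<^sub>R x) = 0" if "\<mu> \<in> Op" for \<mu>
        using that uz by (force simp: Op_def)
      have "((\<lambda>l. l ^ DIM(real^'n) * h (l *\<^sub>R x)) has_real_derivative 0) (at l)"
      proof (rule has_field_derivative_transform_within_open[OF DERIV_const oO lO])
        fix y assume "y \<in> Op"
        then show "0 = y ^ DIM(real^'n) * h (y *\<^sub>R x)" using uO by (simp add: h_def)
      qed
      moreover have "H x l = 0" using uO[OF lO] by (simp add: H_def h_def)
      ultimately show ?thesis by simp
    qed
  qed
  have bnd: "\<bar>H x l\<bar> \<le> 2^n * (N * Ub^2 * K + 2 * Ub * Gb * K + Ub^2 * K1) * ind x"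
    if l: "1 \<le> l" "l \<le> 2" for x l
  proof (cases "u (l *\<^sub>R x) = 0")
    case True
    then have "H x l = 0" by (simp add: H_def h_def)
    moreover have "0 \<le> 2^n * (N * Ub^2 * K + 2 * Ub * Gb * K + Ub^2 * K1) * ind x"
      using UG K0 K1(2) ind0[of x] by (simp add: Nn)
    ultimately show ?thesis by simp
  next
    case False
    have lx: "l * norm x \<le> \<rho>" using uz[OF False] l by simp
    have xr: "norm x \<le> l * norm x" using l by (simp add: mult_le_cancel_right1)
    have x1: "norm x \<le> 1" "ind x = 1" using lx xr rho by (auto simp: ind_def)
    have lx1: "norm (l *\<^sub>R x) \<le> 1" using lx rho l by simp
    have p1: "l ^ (n-1) \<le> 2^n"
    proof -
      have "l ^ (n-1) \<le> 2 ^ (n-1)" using l by (intro power_mono) auto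
      also have "(2::real) ^ (n-1) \<le> 2 ^ n" by (intro power_increasing) auto
      finally show ?thesis .
    qed
    have p2: "l ^ n \<le> 2^n" using l by (intro power_mono) auto
    have X: "\<bar>x \<bullet> grad u (l *\<^sub>R x)\<bar> \<le> Gb"
    proof -
      have "\<bar>x \<bullet> grad u (l *\<^sub>R x)\<bar> \<le> norm x * norm (grad u (l *\<^sub>R x))" by (rule Cauchy_Schwarz_ineq2)
      also have "\<dots> \<le> 1 * Gb" using x1 UG(4)[OF lx1] by (intro mult_mono) auto
      finally show ?thesis by simp
    qed
    have k: "0 \<le> kf a s d (l * norm x)" "kf a s d (l * norm x) \<le> K" using K[of "l * norm x"] lx l by auto
    have z: "\<bar>norm x * kdf a s d (l * norm x)\<bar> \<le> K1"
    proof (cases "x = 0")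
      case True then show ?thesis using K1(2) by simp
    next
      case False
      have lp: "0 < l * norm x" using False l by simp
      have "\<bar>norm x * kdf a s d (l * norm x)\<bar> = \<bar>l * norm x * kdf a s d (l * norm x)\<bar> / l"
        using l by (simp add: abs_mult)
      also have "\<dots> \<le> K1 / l" using K1(1)[OF lp lx] l by (intro divide_right_mono) auto
      also have "\<dots> \<le> K1" using K1(2) l by (simp add: divide_le_eq mult_le_cancel_left1)
      finally show ?thesis .
    qed
    have "H x l = N * l^(n-1) * ((u (l *\<^sub>R x))^2 * kf a s d (l * norm x)) + l^n * (2 * u (l *\<^sub>R x) * (x \<bullet> grad u (l *\<^sub>R x)) * kf a s d (l * norm x)
      + (u (l *\<^sub>R x))^2 * (norm x * kdf a s d (l * norm x)))"
      using l by (simp add: H_def h_def)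
    also have "\<bar>\<dots>\<bar> \<le> 2^n * (N * Ub^2 * K + 2 * Ub * Gb * K + Ub^2 * K1)"
      using l by (intro H_bound p1 p2 UG(3)[OF lx1] X k z) (auto simp: Nn)
    finally show ?thesis using x1 by simp
  qed
  have H1: "integrable lborel (\<lambda>x. H x 1)" "integral\<^sup>L lborel (\<lambda>x. H x 1) = 0"
    using ray_integral_zero[OF hm hi der bnd indi] by auto
  have H1eq: "H x 1 = G x - F x" for x
    by (simp add: H_def G_def F_def h_def Nn algebra_simps power2_eq_square)
  have qx: "q x = (norm x)^2 * (1 - Ef a s (norm x))" "(norm x)\<^sup>2 - norm x powr (N/2) = (norm x)^2 * (1 - Tf s (norm x))"
    if "x \<noteq> 0" for x
    using qform(1)[where r="norm x" and s=s and N=N and a=a] qform(2)[where r="norm x" and s=s and N=N] that by (auto simp: q_def s_def)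
  have ET: "0 \<le> Ef a s (norm x)" "Ef a s (norm x) < 1" "0 \<le> Tf s (norm x)" "Tf s (norm x) < 1"
    if "norm x < 1" for x :: "real^'n"
  proof -
    show "0 \<le> Ef a s (norm x)" using a by (simp add: E_ge0)
    show "Ef a s (norm x) < 1" by (rule E_lt1) (use a that s0 in auto)
    show "0 \<le> Tf s (norm x)" by (simp add: T_ge0)
    show "Tf s (norm x) < 1" by (rule T_lt1) (use that s0 in auto)
  qed
  have Gb: "\<bar>G x\<bar> \<le> Ub^2 * (N * K + K1 + K^2) * ind x" for x
  proof (cases "u x = 0")
    case True then show ?thesis using ind0[of x] K0 K1(2) UG by (simp add: G_def Nn)
  next
    case False
    note sp = supp[OF False]
    have k: "0 \<le> kf a s d (norm x)" "kf a s d (norm x) \<le> K" using K[of "norm x"] sp by auto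
    have z: "\<bar>norm x * kdf a s d (norm x)\<bar> \<le> K1"
      using K1 sp by (cases "x = 0") auto
    have Q: "0 \<le> q x * (norm x)^2" "q x * (norm x)^2 \<le> 1"
    proof -
      have "0 \<le> q x * (norm x)^2 \<and> q x * (norm x)^2 \<le> 1"
      proof (cases "x = 0")
        case True then show ?thesis by simp
      next
        case x0: False
        have e: "0 \<le> 1 - Ef a s (norm x)" "1 - Ef a s (norm x) \<le> 1" using ET[of x] sp rho by auto
        have r2: "(norm x)^2 \<le> 1" using sp by (simp add: power_le_one)
        have "q x * (norm x)^2 = (norm x)^2 * (norm x)^2 * (1 - Ef a s (norm x))" using qx[OF x0] by simp
        moreover have "(norm x)^2 * (norm x)^2 * (1 - Ef a s (norm x)) \<le> 1 * 1 * 1"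
          using e r2 by (intro mult_mono) auto
        ultimately show ?thesis using e by simp
      qed
      then show "0 \<le> q x * (norm x)^2" "q x * (norm x)^2 \<le> 1" by auto
    qed
    have "\<bar>G x\<bar> = (u x)^2 * \<bar>N * kf a s d (norm x) + norm x * kdf a s d (norm x) - q x * (norm x)^2 * (kf a s d (norm x))^2\<bar>"
      by (simp add: G_def abs_mult)
    also have "\<dots> \<le> Ub^2 * (N * K + K1 + K^2)"
      using u2b[OF sp(2)] abs3[OF k z Q] by (intro mult_mono) (auto simp: Nn)
    finally show ?thesis using sp by simp
  qed
  have Gi: "integrable lborel G"
    by (rule Bochner_Integration.integrable_bound[OF indi[of "Ub^2 * (N * K + K1 + K^2)"] GmL])
      (intro AE_I2, metis Gb abs_ge_self order_trans real_norm_def)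
  have Feq: "F = (\<lambda>x. G x - H x 1)" using H1eq by (auto simp: fun_eq_iff)
  have Fi: "integrable lborel F" unfolding Feq using Gi H1(1) by simp
  have intF: "integral\<^sup>L lborel F = integral\<^sup>L lborel G"
    unfolding Feq using Gi H1 by simp
  have fs0: "0 \<le> fs x" if "x \<in> ball 0 1" for x
  proof (cases "x = 0")
    case True then show ?thesis by (simp add: fs_def)
  next
    case False
    have "(norm x)\<^sup>2 - a * norm x powr (N/2 + 1) = q x" by (simp add: q_def)
    then have d1: "0 < (norm x)\<^sup>2 - a * norm x powr (N/2 + 1)" using qx(1)[OF False] ET[of x] that False by simp
    have d2: "0 < (norm x)\<^sup>2 - norm x powr (N/2)" using qx(2)[OF False] ET[of x] that False by simp
    show ?thesis unfolding fs_def using d1 d2 d by (intro divide_nonneg_pos mult_nonneg_nonneg) (auto intro: add_nonneg_pos)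
  qed
  have Gge: "s^2 * fs x * indicator (ball 0 1) x \<le> G x" for x
  proof (cases "u x = 0")
    case True then show ?thesis by (simp add: G_def fs_def)
  next
    case False
    note sp = supp[OF False]
    have xb: "x \<in> ball 0 1" using sp rho by simp
    show ?thesis
    proof (cases "x = 0")
      case True
      have "0 \<le> kf a s d 0" using K[of 0] rho by simp
      then show ?thesis using True by (simp add: G_def fs_def q_def Nn)
    next
      case x0: False
      define r where "r = norm x"
      define E where "E = Ef a s r"
      define T where "T = Tf s r"
      define R where "R = r^4"
      have r: "0 < r" "r < 1" using x0 sp rho by (auto simp: r_def)
      have E: "0 \<le> E" "E < 1" and T: "0 \<le> T" "T < 1" using ET[of x] sp rho by (auto simp: E_def T_def r_def)
      have R: "0 \<le> R" "R = r^2 * r^2" by (auto simp: R_def)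
      have gE: "gf a s r = s / ((1 - E) * (1 - T))" by (simp add: gf_def E_def T_def)
      have fsx: "fs x = (u x)^2 / ((R + d) * (1 - E) * (1 - T))"
      proof -
        have nz: "1 - E \<noteq> 0" "1 - T \<noteq> 0" "R + d \<noteq> 0" "r \<noteq> 0" using E T R(1) d r by auto
        have "fs x = (u x)^2 * (R / (R + d)) / ((r^2 * (1 - E)) * (r^2 * (1 - T)))"
          using qx[OF x0] unfolding fs_def q_def by (simp add: r_def R_def E_def T_def)
        also have "\<dots> = (u x)^2 * (R / (R + d)) / (R * ((1 - E) * (1 - T)))"
          by (simp add: R(2) algebra_simps)
        also have "\<dots> = (u x)^2 / ((R + d) * ((1 - E) * (1 - T)))"
          using nz R(2) by (intro frac_cancel) auto
        also have "\<dots> = (u x)^2 / ((R + d) * (1 - E) * (1 - T))" by (simp add: mult.assoc)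
        finally show ?thesis .
      qed
      have Z: "N * kf a s d r + r * kdf a s d r - q x * r^2 * (kf a s d r)^2
          = (2 * s + 4) * (gf a s r/(R+d)) + ((s * ((s + 1) * E * (1 - T) + (1 - E) * s * T) / ((1 - E) * (1 - T)) ^ 2)*(R+d) - 4*R*gf a s r)/(R+d)^2
            - R*(1-E)*(gf a s r/(R+d))^2"
      proof -
        have qxr: "q x = r^2 * (1 - E)" using qx(1)[OF x0] by (simp add: r_def E_def)
        have 1: "q x * r^2 * (kf a s d r)^2 = R*(1-E)*(gf a s r/(R+d))^2"
          unfolding qxr kf_def R_def[symmetric] by (simp add: R(2) algebra_simps)
        have 2: "N * kf a s d r = (2 * s + 4) * (gf a s r/(R+d))" by (simp add: Ns kf_def R_def)
        have 3: "r * kdf a s d r = ((s * ((s + 1) * E * (1 - T) + (1 - E) * s * T) / ((1 - E) * (1 - T)) ^ 2)*(R+d) - 4*R*gf a s r)/(R+d)^2"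
          unfolding r_kdf[OF r(1)] by (simp add: R_def E_def T_def)
        show ?thesis unfolding 1 2 3 ..
      qed
      have "s^2/((R+d)*(1-E)*(1-T)) \<le> N * kf a s d r + r * kdf a s d r - q x * r^2 * (kf a s d r)^2"
        unfolding Z gE using key_ineq[OF s0 E T R(1) d] by simp
      then have "(u x)^2 * (s^2/((R+d)*(1-E)*(1-T))) \<le> G x"
        unfolding G_def r_def[symmetric] by (intro mult_left_mono) auto
      moreover have "s^2 * fs x * indicator (ball 0 1) x = (u x)^2 * (s^2/((R+d)*(1-E)*(1-T)))"
        using xb by (simp add: fsx)
      ultimately show ?thesis by simp
    qed
  qed
  have G0: "0 \<le> G x" for x
  proof (cases "x \<in> ball 0 1")
    case True
    then have "0 \<le> s^2 * fs x" using fs0[OF True] by simp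
    then show ?thesis using Gge[of x] True by simp
  next
    case False
    then show ?thesis using Gge[of x] by simp
  qed
  have Fle: "ennreal (F x) \<le> ennreal (W x) * indicator (ball 0 1) x" for x
  proof (cases "u x = 0")
    case True then show ?thesis by (simp add: F_def)
  next
    case False
    note sp = supp[OF False]
    have xb: "x \<in> ball 0 1" using sp rho by simp
    have "F x \<le> W x"
    proof (cases "x = 0")
      case True then show ?thesis by (simp add: F_def W_def)
    next
      case x0: False
      have qp: "0 < q x" using qx(1)[OF x0] ET[of x] x0 xb by simp
      have "F x \<le> (norm (grad u x))^2 / q x"
        unfolding F_def
        by (rule sq_ineq[OF qp norm_ge_zero Cauchy_Schwarz_ineq2 norm_ge_zero])
      then show ?thesis by (simp add: W_def q_def)
    qed
    then show ?thesis using xb by (simp add: ennreal_leI)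
  qed
  have fsm: "(\<lambda>x. ennreal (fs x) * indicator (ball 0 1) x) \<in> borel_measurable lborel"
    unfolding fs_def by (rule fseq_meas[OF um])
  have "ennreal (s^2) * (\<integral>\<^sup>+ x. ennreal (fs x) * indicator (ball 0 1) x \<partial>lborel)
      = (\<integral>\<^sup>+ x. ennreal (s^2) * (ennreal (fs x) * indicator (ball 0 1) x) \<partial>lborel)"
    by (rule nn_integral_cmult[symmetric, OF fsm])
  also have "\<dots> \<le> (\<integral>\<^sup>+ x. ennreal (G x) \<partial>lborel)"
  proof (rule nn_integral_mono)
    fix x :: "real^'n"
    show "ennreal (s^2) * (ennreal (fs x) * indicator (ball 0 1) x) \<le> ennreal (G x)"
    proof (cases "x \<in> ball 0 1")
      case True
      then have "ennreal (s^2) * (ennreal (fs x) * indicator (ball 0 1) x) = ennreal (s^2 * fs x * indicator (ball 0 1) x)"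
        using fs0[OF True] by (simp add: ennreal_mult)
      also have "\<dots> \<le> ennreal (G x)" using Gge[of x] by (rule ennreal_leI)
      finally show ?thesis .
    qed simp
  qed
  also have "\<dots> = ennreal (integral\<^sup>L lborel G)"
    by (rule nn_integral_eq_integral[OF Gi]) (simp add: G0)
  also have "\<dots> = ennreal (integral\<^sup>L lborel F)" by (simp add: intF)
  also have "\<dots> \<le> ennreal (integral\<^sup>L lborel (\<lambda>x. max 0 (F x)))"
    by (intro ennreal_leI integral_mono Fi integrable_max) auto
  also have "\<dots> = (\<integral>\<^sup>+ x. ennreal (max 0 (F x)) \<partial>lborel)"
    by (rule nn_integral_eq_integral[symmetric]) (auto intro!: integrable_max Fi)
  also have "\<dots> = (\<integral>\<^sup>+ x. ennreal (F x) \<partial>lborel)" by (simp add: ennreal_max_0)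
  also have "\<dots> \<le> (\<integral>\<^sup>+ x. ennreal (W x) * indicator (ball 0 1) x \<partial>lborel)"
    by (intro nn_integral_mono Fle)
  finally show ?thesis unfolding c4 fs_def W_def .
qed




lemma main_a:
  fixes u :: "real^'n \<Rightarrow> real" and a :: real
  assumes N5: "CARD('n) \<ge> 5" and uC: "u \<in> C0_infty (ball 0 1)" and a: "0 \<le> a" "a < 1"
  defines "N \<equiv> real CARD('n)"
  shows "ennreal (((N - 4)/2)\<^sup>2) * (\<integral>\<^sup>+ x \<in> ball 0 1. ennreal ((u x)^2 /
              (((norm x)\<^sup>2 - a * norm x powr (N/2 + 1)) * ((norm x)\<^sup>2 - norm x powr (N/2)))) \<partial>lborel)
    \<le> (\<integral>\<^sup>+ x \<in> ball 0 1. ennreal ((norm (grad u x))\<^sup>2 / ((norm x)\<^sup>2 - a * norm x powr (N/2 + 1))) \<partial>lborel)"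
proof -
  define dd :: "nat \<Rightarrow> real" where "dd m = 1 / (real m + 1)" for m
  define V where "V x = (u x)^2 / (((norm x)\<^sup>2 - a * norm x powr (N/2 + 1)) * ((norm x)\<^sup>2 - norm x powr (N/2)))" for x :: "real^'n"
  define f where "f m x = ennreal ((u x)^2 * ((norm x)^4 / ((norm x)^4 + dd m)) /
              (((norm x)\<^sup>2 - a * norm x powr (N/2 + 1)) * ((norm x)\<^sup>2 - norm x powr (N/2)))) * indicator (ball 0 1) x"
    for m and x :: "real^'n"
  define L where "L = (\<integral>\<^sup>+ x \<in> ball 0 1. ennreal ((norm (grad u x))\<^sup>2 / ((norm x)\<^sup>2 - a * norm x powr (N/2 + 1))) \<partial>lborel)"
  have sm: "smooth u" using uC by (simp add: C0_infty_def)
  have um[measurable]: "u \<in> borel_measurable borel"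
    by (rule borel_measurable_continuous_onI[OF smooth_cont[OF sm]])
  have dd: "0 < dd m" for m by (simp add: dd_def)
  have ineq: "ennreal (((N - 4)/2)\<^sup>2) * integral\<^sup>N lborel (f m) \<le> L" for m
    using ineq_d[OF N5 uC a dd[of m]] unfolding f_def L_def N_def by simp
  have fm: "f m \<in> borel_measurable lborel" for m
    unfolding f_def by (rule fseq_meas[OF um])
  have den: "0 \<le> ((norm x)\<^sup>2 - a * norm x powr (N/2 + 1)) * ((norm x)\<^sup>2 - norm x powr (N/2))"
    if "x \<in> ball 0 1" for x :: "real^'n"
  proof (cases "x = 0")
    case True then show ?thesis by simp
  next
    case False
    define s where "s = N/2 - 2"
    have s0: "s > 0" using N5 by (simp add: s_def N_def)
    have r: "0 < norm x" "norm x < 1" using False that by auto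
    have "Ef a s (norm x) < 1" by (rule E_lt1) (use a r s0 in auto)
    moreover have "Tf s (norm x) < 1" by (rule T_lt1) (use r s0 in auto)
    ultimately show ?thesis
      using qform(1)[where r="norm x" and s=s and N=N and a=a] qform(2)[where r="norm x" and s=s and N=N] r
      by (simp add: s_def)
  qed
  have inc: "incseq f"
  proof (rule incseq_SucI, rule le_funI)
    fix m and x :: "real^'n"
    show "f m x \<le> f (Suc m) x"
    proof (cases "x \<in> ball 0 1")
      case True
      have R: "0 \<le> (norm x)^4" by simp
      have "(norm x)^4 / ((norm x)^4 + dd m) \<le> (norm x)^4 / ((norm x)^4 + dd (Suc m))"
        using dd[of m] dd[of "Suc m"] R by (intro divide_left_mono) (auto simp: dd_def frac_le intro!: mult_pos_pos add_nonneg_pos)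
      then have "(u x)^2 * ((norm x)^4 / ((norm x)^4 + dd m)) \<le> (u x)^2 * ((norm x)^4 / ((norm x)^4 + dd (Suc m)))"
        by (intro mult_left_mono) auto
      then have "(u x)^2 * ((norm x)^4 / ((norm x)^4 + dd m)) / (((norm x)\<^sup>2 - a * norm x powr (N/2 + 1)) * ((norm x)\<^sup>2 - norm x powr (N/2)))
        \<le> (u x)^2 * ((norm x)^4 / ((norm x)^4 + dd (Suc m))) / (((norm x)\<^sup>2 - a * norm x powr (N/2 + 1)) * ((norm x)\<^sup>2 - norm x powr (N/2)))"
        by (intro divide_right_mono den[OF True])
      then show ?thesis using True unfolding f_def by (simp add: ennreal_leI)
    qed (simp add: f_def)
  qed
  have dd0: "dd \<longlonglongrightarrow> 0" unfolding dd_def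
    using LIMSEQ_inverse_real_of_nat by (simp add: inverse_eq_divide add.commute)
  have lim: "(\<lambda>m. f m x) \<longlonglongrightarrow> ennreal (V x) * indicator (ball 0 1) x" for x
  proof (cases "x \<in> ball 0 1")
    case False then show ?thesis by (simp add: f_def)
  next
    case True
    show ?thesis
    proof (cases "x = 0")
      case True then show ?thesis by (simp add: f_def V_def)
    next
      case x0: False
      have R: "0 < (norm x)^4" using x0 by simp
      have "(\<lambda>m. (norm x)^4 / ((norm x)^4 + dd m)) \<longlonglongrightarrow> (norm x)^4 / ((norm x)^4 + 0)"
        using R by (intro tendsto_intros dd0) auto
      then have "(\<lambda>m. (norm x)^4 / ((norm x)^4 + dd m)) \<longlonglongrightarrow> 1" using R by simp
      then have "(\<lambda>m. (u x)^2 * ((norm x)^4 / ((norm x)^4 + dd m)) *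
              inverse (((norm x)\<^sup>2 - a * norm x powr (N/2 + 1)) * ((norm x)\<^sup>2 - norm x powr (N/2)))) \<longlonglongrightarrow> (u x)^2 * 1 *
              inverse (((norm x)\<^sup>2 - a * norm x powr (N/2 + 1)) * ((norm x)\<^sup>2 - norm x powr (N/2)))"
        by (intro tendsto_mult_right tendsto_mult_left)
      then have "(\<lambda>m. ennreal ((u x)^2 * ((norm x)^4 / ((norm x)^4 + dd m)) *
              inverse (((norm x)\<^sup>2 - a * norm x powr (N/2 + 1)) * ((norm x)\<^sup>2 - norm x powr (N/2))))) \<longlonglongrightarrow> ennreal ((u x)^2 * 1 *
              inverse (((norm x)\<^sup>2 - a * norm x powr (N/2 + 1)) * ((norm x)\<^sup>2 - norm x powr (N/2))))"
        by (rule tendsto_ennrealI)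
      moreover have "f m x = ennreal ((u x)^2 * ((norm x)^4 / ((norm x)^4 + dd m)) *
              inverse (((norm x)\<^sup>2 - a * norm x powr (N/2 + 1)) * ((norm x)\<^sup>2 - norm x powr (N/2))))" for m
        using True unfolding f_def by (simp only: divide_inverse indicator_simps mult_1_right)
      moreover have "ennreal (V x) * indicator (ball 0 1) x = ennreal ((u x)^2 * 1 *
              inverse (((norm x)\<^sup>2 - a * norm x powr (N/2 + 1)) * ((norm x)\<^sup>2 - norm x powr (N/2))))"
        using True unfolding V_def by (simp only: divide_inverse indicator_simps mult_1_right)
      ultimately show ?thesis by simp
    qed
  qed
  have "(\<lambda>m. integral\<^sup>N lborel (f m)) \<longlonglongrightarrow> (\<integral>\<^sup>+ x. ennreal (V x) * indicator (ball 0 1) x \<partial>lborel)"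
    by (rule nn_integral_LIMSEQ[OF inc fm lim])
  then have "(\<lambda>m. ennreal (((N - 4)/2)\<^sup>2) * integral\<^sup>N lborel (f m)) \<longlonglongrightarrow>
      ennreal (((N - 4)/2)\<^sup>2) * (\<integral>\<^sup>+ x. ennreal (V x) * indicator (ball 0 1) x \<partial>lborel)"
    by (intro ennreal_tendsto_cmult) auto
  then have "ennreal (((N - 4)/2)\<^sup>2) * (\<integral>\<^sup>+ x. ennreal (V x) * indicator (ball 0 1) x \<partial>lborel) \<le> L"
    using ineq by (intro LIMSEQ_le_const2) auto
  then show ?thesis unfolding V_def L_def .
qed



theorem mainTheorem3:
  fixes u :: "real^'n \<Rightarrow> real"
  assumes N: "CARD('n) \<ge> 5"
    and u: "u \<in> C0_infty (ball 0 1)"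
  defines "N \<equiv> real CARD('n)"
  shows "((\<integral>\<^sup>+ x \<in> ball 0 1. ennreal ((norm (grad u x))\<^sup>2 /
              ((norm x)\<^sup>2 - 9/10 * norm x powr (N/2 + 1))) \<partial>lborel)
         \<ge> ennreal (((N - 4)/2)\<^sup>2) *
           (\<integral>\<^sup>+ x \<in> ball 0 1. ennreal ((u x)\<^sup>2 /
              (((norm x)\<^sup>2 - 9/10 * norm x powr (N/2 + 1)) * ((norm x)\<^sup>2 - norm x powr (N/2))))
            \<partial>lborel)) \<and>
         ((\<integral>\<^sup>+ x \<in> ball 0 1. ennreal ((norm (grad u x))\<^sup>2 / (norm x)\<^sup>2) \<partial>lborel)
         \<ge> ennreal (((N - 4)/2)\<^sup>2) *
           (\<integral>\<^sup>+ x \<in> ball 0 1. ennreal ((u x)\<^sup>2 /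
              ((norm x)\<^sup>2 * ((norm x)\<^sup>2 - norm x powr (N/2)))) \<partial>lborel))"
proof
  show "(\<integral>\<^sup>+ x \<in> ball 0 1. ennreal ((norm (grad u x))\<^sup>2 /
              ((norm x)\<^sup>2 - 9/10 * norm x powr (N/2 + 1))) \<partial>lborel)
         \<ge> ennreal (((N - 4)/2)\<^sup>2) *
           (\<integral>\<^sup>+ x \<in> ball 0 1. ennreal ((u x)\<^sup>2 /
              (((norm x)\<^sup>2 - 9/10 * norm x powr (N/2 + 1)) * ((norm x)\<^sup>2 - norm x powr (N/2))))
            \<partial>lborel)"
    using main_a[OF N u, of "9/10"] unfolding N_def by simp
  show "(\<integral>\<^sup>+ x \<in> ball 0 1. ennreal ((norm (grad u x))\<^sup>2 / (norm x)\<^sup>2) \<partial>lborel)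
         \<ge> ennreal (((N - 4)/2)\<^sup>2) *
           (\<integral>\<^sup>+ x \<in> ball 0 1. ennreal ((u x)\<^sup>2 /
              ((norm x)\<^sup>2 * ((norm x)\<^sup>2 - norm x powr (N/2)))) \<partial>lborel)"
    using main_a[OF N u, of 0] unfolding N_def by simp
qed

end
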